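(* Let $p$ and $p'$ be ordered quadruples of distinct points of $\partial\mathbf H^n_{\mathbb C}$. Then there exists an anti-holomorphic isometry of $\mathbf H^n_{\mathbb C}$ mapping $p_i$ to $p'_i$ for each $i$ if and only if the normalized Gram matrix of $p'$ is the complex conjugate of the normalized Gram matrix of $p$.
   Context: $\mathbb C^{n,1}$ is $\mathbb C^{n+1}$ with the Hermitian form $\langle Z,W\rangle=z_1\overline{w}_{n+1}+z_2\overline{w}_2+\cdots+z_n\overline{w}_n+z_{n+1}\overline{w}_1$; $\mathbf H^n_{\mathbb C}$ and $\partial\mathbf H^n_{\mathbb C}$ are the negative and null lines in $\mathbb P\mathbb C^n$. The full isometry group is generated by $\mathrm{PU}(n,1)$ and complex conjugation; anti-holomorphic isometries are those not in $\mathrm{PU}(n,1)$. For a quadruple with null lifts $P_i$, a Gram matrix is $(\langle P_i,P_j\rangle)$; the normalized Gram matrix of $p$ is the unique Gram matrix $G=(g_{ij})$ (for suitable lifts) with $g_{ii}=0$, $g_{12}=g_{23}=g_{34}=1$, $|g_{13}|=1$. *)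

theory Defs
  imports Complex_Main
begin

text \<open>Vectors of C^{n,1} are modelled as functions nat => complex; only the
coordinates 1..n+1 are relevant.  Matrices are nat => nat => complex, acting on
coordinates 1..n+1.\<close>

definition herm :: "nat \<Rightarrow> (nat \<Rightarrow> complex) \<Rightarrow> (nat \<Rightarrow> complex) \<Rightarrow> complex" where
  "herm n Z W = Z 1 * cnj (W (n+1)) + (\<Sum>k\<in>{2..n}. Z k * cnj (W k)) + Z (n+1) * cnj (W 1)"

text \<open>A nonzero null vector: a lift of a point of the boundary of complex hyperbolic n-space.\<close>
definition null_lift :: "nat \<Rightarrow> (nat \<Rightarrow> complex) \<Rightarrow> bool" where
  "null_lift n P \<longleftrightarrow> herm n P P = 0 \<and> (\<exists>k\<in>{1..n+1}. P k \<noteq> 0)"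

definition same_line :: "nat \<Rightarrow> (nat \<Rightarrow> complex) \<Rightarrow> (nat \<Rightarrow> complex) \<Rightarrow> bool" where
  "same_line n P Q \<longleftrightarrow> (\<exists>c. c \<noteq> 0 \<and> (\<forall>k\<in>{1..n+1}. Q k = c * P k))"

definition mat_vec :: "nat \<Rightarrow> (nat \<Rightarrow> nat \<Rightarrow> complex) \<Rightarrow> (nat \<Rightarrow> complex) \<Rightarrow> (nat \<Rightarrow> complex)" where
  "mat_vec n A Z = (\<lambda>k. \<Sum>j\<in>{1..n+1}. A k j * Z j)"

definition in_U :: "nat \<Rightarrow> (nat \<Rightarrow> nat \<Rightarrow> complex) \<Rightarrow> bool" where
  "in_U n A \<longleftrightarrow> (\<forall>Z W. herm n (mat_vec n A Z) (mat_vec n A W) = herm n Z W)"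

definition conj_vec :: "(nat \<Rightarrow> complex) \<Rightarrow> (nat \<Rightarrow> complex)" where
  "conj_vec Z = (\<lambda>k. cnj (Z k))"

text \<open>The anti-holomorphic isometries are exactly the maps [Z] |-> [A (conj Z)] with A in U(n,1)
(elements of PU(n,1) composed with complex conjugation).\<close>
definition antiholo_maps :: "nat \<Rightarrow> (nat \<Rightarrow> nat \<Rightarrow> complex) \<Rightarrow> (nat \<Rightarrow> complex) \<Rightarrow> (nat \<Rightarrow> complex) \<Rightarrow> bool" where
  "antiholo_maps n A P Q \<longleftrightarrow> same_line n (mat_vec n A (conj_vec P)) Q"

text \<open>Quadruples: p i for i in {1..4} are lifts of the four points.\<close>
definition distinct_boundary_quadruple :: "nat \<Rightarrow> (nat \<Rightarrow> nat \<Rightarrow> complex) \<Rightarrow> bool" where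
  "distinct_boundary_quadruple n p \<longleftrightarrow>
     (\<forall>i\<in>{1..4}. null_lift n (p i)) \<and>
     (\<forall>i\<in>{1..4}. \<forall>j\<in>{1..4}. i \<noteq> j \<longrightarrow> \<not> same_line n (p i) (p j))"

definition is_norm_gram :: "nat \<Rightarrow> (nat \<Rightarrow> nat \<Rightarrow> complex) \<Rightarrow> (nat \<Rightarrow> nat \<Rightarrow> complex) \<Rightarrow> bool" where
  "is_norm_gram n p G \<longleftrightarrow>
     (\<exists>c::nat \<Rightarrow> complex. (\<forall>i\<in>{1..4}. c i \<noteq> 0) \<and>
        (\<forall>i\<in>{1..4}. \<forall>j\<in>{1..4}. G i j = herm n (\<lambda>k. c i * p i k) (\<lambda>k. c j * p j k))) \<and>
     (\<forall>i j. (i \<notin> {1..4} \<or> j \<notin> {1..4}) \<longrightarrow> G i j = 0) \<and>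
     (\<forall>i\<in>{1..4}. G i i = 0) \<and>
     G 1 2 = 1 \<and> G 2 3 = 1 \<and> G 3 4 = 1 \<and> cmod (G 1 3) = 1"

definition norm_gram :: "nat \<Rightarrow> (nat \<Rightarrow> nat \<Rightarrow> complex) \<Rightarrow> (nat \<Rightarrow> nat \<Rightarrow> complex)" where
  "norm_gram n p = (THE G. is_norm_gram n p G)"

end

theory Submission
  imports Defs
begin

definition eqv :: "nat \<Rightarrow> (nat \<Rightarrow> complex) \<Rightarrow> (nat \<Rightarrow> complex) \<Rightarrow> bool" where
  "eqv n X Y \<longleftrightarrow> (\<forall>k\<in>{1..n+1}. X k = Y k)"

lemma sum_split:
  fixes n :: nat
  assumes "n \<ge> 1"
  shows "(\<Sum>j\<in>{1..n+1}. f j) = f 1 + (\<Sum>j\<in>{2..n}. f j) + f (n+1)"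
proof -
  have "(\<Sum>j\<in>{1..Suc n}. f j) = (\<Sum>j\<in>{1..n}. f j) + f (Suc n)"
    by (simp add: sum.cl_ivl_Suc)
  moreover have "(\<Sum>j\<in>{1..n}. f j) = f 1 + (\<Sum>j\<in>{Suc 1..n}. f j)"
    using assms by (simp add: sum.atLeast_Suc_atMost)
  ultimately show ?thesis by (simp add: numeral_2_eq_2)
qed

lemma herm_cong:
  assumes "eqv n X X'" "eqv n Y Y'"
  shows "herm n X Y = herm n X' Y'"
proof -
  have "(\<Sum>k\<in>{2..n}. X k * cnj (Y k)) = (\<Sum>k\<in>{2..n}. X' k * cnj (Y' k))"
    using assms unfolding eqv_def by (intro sum.cong) auto
  then show ?thesis using assms unfolding herm_def eqv_def by auto
qed

lemma herm_add_left: "herm n (\<lambda>k. X k + Y k) W = herm n X W + herm n Y W"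
  unfolding herm_def by (simp add: sum.distrib algebra_simps)
lemma herm_diff_left: "herm n (\<lambda>k. X k - Y k) W = herm n X W - herm n Y W"
  unfolding herm_def by (simp add: sum_subtractf algebra_simps)
lemma herm_scale_left: "herm n (\<lambda>k. a * X k) W = a * herm n X W"
  unfolding herm_def by (simp add: sum_distrib_left algebra_simps)
lemma herm_add_right: "herm n W (\<lambda>k. X k + Y k) = herm n W X + herm n W Y"
  unfolding herm_def by (simp add: sum.distrib algebra_simps)
lemma herm_diff_right: "herm n W (\<lambda>k. X k - Y k) = herm n W X - herm n W Y"
  unfolding herm_def by (simp add: sum_subtractf algebra_simps)
lemma herm_scale_right: "herm n W (\<lambda>k. a * X k) = cnj a * herm n W X"
  unfolding herm_def by (simp add: sum_distrib_left algebra_simps)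
lemma herm_sym: "herm n Y X = cnj (herm n X Y)"
  unfolding herm_def by (simp add: algebra_simps)
lemma herm_conj: "herm n (conj_vec X) (conj_vec Y) = cnj (herm n X Y)"
  unfolding herm_def conj_vec_def by simp

lemma herm_self_real: "Im (herm n X X) = 0"
  using herm_sym[of n X X] by (metis Reals_cnj_iff complex_is_Real_iff)

lemma sumsq: "(\<Sum>k\<in>S. X k * cnj (X k)) = complex_of_real (\<Sum>k\<in>S. (cmod (X k))^2)"
  by (simp add: complex_norm_square del: of_real_power)

lemma sumsq_zero:
  fixes n :: nat
  assumes "(\<Sum>k\<in>{2..n}. X k * cnj (X k)) = 0" "k \<in> {2..n}"
  shows "X k = 0"
proof -
  have "complex_of_real (\<Sum>k\<in>{2..n}. (cmod (X k))^2) = 0" using assms(1) sumsq[of X "{2..n}"] by argo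
  then have "(\<Sum>k\<in>{2..n}. (cmod (X k))^2) = 0" by (simp only: of_real_eq_0_iff)
  then have "(cmod (X k))^2 = 0" using assms(2) by (subst (asm) sum_nonneg_eq_0_iff) auto
  then show ?thesis by simp
qed

lemma herm_w1:
  assumes "n \<ge> 1" "w 1 = 0"
  shows "herm n w w = (\<Sum>k\<in>{2..n}. w k * cnj (w k))"
  using assms unfolding herm_def by simp

lemma herm_mid:
  fixes n :: nat
  assumes "n \<ge> 1" "w 1 = 0" "\<forall>k\<in>{2..n}. w k = 0"
  shows "herm n w v = w (n+1) * cnj (v 1)"
  using assms unfolding herm_def by simp

lemma range_cases:
  fixes n :: nat
  assumes "k \<in> {1..n+1}"
  shows "k = 1 \<or> k \<in> {2..n} \<or> k = n+1"
  using assms by auto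

lemma sumsq_nonneg: "Re (\<Sum>k\<in>S. X k * cnj (X k)) \<ge> 0"
  by (simp only: sumsq Re_complex_of_real) (simp add: sum_nonneg)

lemma herm_uv_expand:
  "herm n (\<lambda>k. u k + t * v k) (\<lambda>k. u k + t * v k) =
     herm n u u + cnj t * herm n u v + t * herm n v u + t * cnj t * herm n v v"
  by (simp add: herm_add_left herm_add_right herm_scale_left herm_scale_right algebra_simps)

lemma pos_compl:
  fixes n :: nat
  assumes n1: "n \<ge> 1" and vneg: "Re (herm n v v) < 0" and uv: "herm n u v = 0"
    and unz: "\<exists>k\<in>{1..n+1}. u k \<noteq> 0"
  shows "Re (herm n u u) > 0"
proof (rule ccontr)
  assume H: "\<not> Re (herm n u u) > 0"
  have v1: "v 1 \<noteq> 0"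
  proof
    assume "v 1 = 0"
    then have "herm n v v = (\<Sum>k\<in>{2..n}. v k * cnj (v k))" using herm_w1 n1 by blast
    then show False using vneg sumsq_nonneg[of v "{2..n}"] by simp
  qed
  define t where "t = - u 1 / v 1"
  define w where "w = (\<lambda>k. u k + t * v k)"
  have w1: "w 1 = 0" using v1 by (simp add: w_def t_def)
  have hvu: "herm n v u = 0" using herm_sym[of n v u] uv by simp
  have hw: "herm n w w = herm n u u + t * cnj t * herm n v v"
    unfolding w_def herm_uv_expand using uv hvu by simp
  have tt: "t * cnj t = complex_of_real ((cmod t)^2)" by (simp add: complex_norm_square del: of_real_power)
  have reW: "Re (herm n w w) = Re (herm n u u) + (cmod t)^2 * Re (herm n v v)"
    using hw tt by simp
  have hwsum: "herm n w w = (\<Sum>k\<in>{2..n}. w k * cnj (w k))" using herm_w1 n1 w1 by blast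
  have ge: "Re (herm n w w) \<ge> 0" using hwsum sumsq_nonneg[of w "{2..n}"] by simp
  have "(cmod t)^2 * Re (herm n v v) \<ge> 0" using ge H reW by linarith
  moreover have "(cmod t)^2 \<ge> 0" by simp
  ultimately have "(cmod t)^2 = 0" using vneg
    by (metis linorder_not_le mult_pos_neg not_less_iff_gr_or_eq)
  then have t0: "t = 0" by simp
  have "Re (herm n w w) = 0" using reW ge H t0 by simp
  moreover have "Im (herm n w w) = 0" by (rule herm_self_real)
  ultimately have "herm n w w = 0" by (simp add: complex_eq_iff)
  then have wmid: "\<forall>k\<in>{2..n}. w k = 0" using hwsum sumsq_zero by metis
  have weq: "w = u" using t0 by (simp add: w_def)
  have u1: "u 1 = 0" using w1 weq by simp
  have umid: "\<forall>k\<in>{2..n}. u k = 0" using wmid weq by simp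
  have "herm n u v = u (n+1) * cnj (v 1)" using herm_mid[OF n1 u1 umid] .
  then have "u (n+1) = 0" using uv v1 by simp
  then show False using unz u1 umid range_cases by metis
qed

lemma null_orth_same:
  fixes n :: nat
  assumes n1: "n \<ge> 1" and u: "null_lift n u" and v: "null_lift n v" and uv: "herm n u v = 0"
  shows "same_line n u v"
proof (cases "v 1 = 0")
  case True
  have hv0: "herm n v v = 0" using v unfolding null_lift_def by simp
  then have "(\<Sum>k\<in>{2..n}. v k * cnj (v k)) = 0" using herm_w1 n1 True by metis
  then have vmid: "\<forall>k\<in>{2..n}. v k = 0" using sumsq_zero by metis
  have vn: "v (n+1) \<noteq> 0" using v True vmid range_cases unfolding null_lift_def by metis
  have "herm n v u = v (n+1) * cnj (u 1)" using herm_mid[OF n1 True vmid] .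
  moreover have "herm n v u = 0" using herm_sym[of n v u] uv by simp
  ultimately have u1: "u 1 = 0" using vn by simp
  have "herm n u u = 0" using u unfolding null_lift_def by simp
  then have "(\<Sum>k\<in>{2..n}. u k * cnj (u k)) = 0" using herm_w1 n1 u1 by metis
  then have umid: "\<forall>k\<in>{2..n}. u k = 0" using sumsq_zero by metis
  have un: "u (n+1) \<noteq> 0" using u u1 umid range_cases unfolding null_lift_def by metis
  show ?thesis unfolding same_line_def
  proof (intro exI[of _ "v (n+1) / u (n+1)"] conjI ballI)
    show "v (n+1) / u (n+1) \<noteq> 0" using un vn by simp
    fix k assume "k \<in> {1..n+1}"
    then consider "k = 1" | "k \<in> {2..n}" | "k = n+1" using range_cases by metis
    then show "v k = v (n+1) / u (n+1) * u k"
      by cases (use u1 True umid vmid un in auto)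
  qed
next
  case v1: False
  define t where "t = - u 1 / v 1"
  define w where "w = (\<lambda>k. u k + t * v k)"
  have w1: "w 1 = 0" using v1 by (simp add: w_def t_def)
  have hvu: "herm n v u = 0" using herm_sym[of n v u] uv by simp
  have hu0: "herm n u u = 0" and hv0: "herm n v v = 0" using u v unfolding null_lift_def by auto
  have "herm n w w = 0" unfolding w_def herm_uv_expand using uv hvu hu0 hv0 by simp
  then have "(\<Sum>k\<in>{2..n}. w k * cnj (w k)) = 0" using herm_w1 n1 w1 by metis
  then have wmid: "\<forall>k\<in>{2..n}. w k = 0" using sumsq_zero by metis
  have "herm n w v = herm n u v + t * herm n v v"
    unfolding w_def by (simp add: herm_add_left herm_scale_left)
  then have "herm n w v = 0" using uv hv0 by simp
  moreover have "herm n w v = w (n+1) * cnj (v 1)" using herm_mid[OF n1 w1 wmid] .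
  ultimately have wn: "w (n+1) = 0" using v1 by simp
  have wz: "\<forall>k\<in>{1..n+1}. u k = - t * v k"
  proof
    fix k assume "k \<in> {1..n+1}"
    then have "w k = 0" using w1 wmid wn range_cases by metis
    then show "u k = - t * v k" by (simp add: w_def add_eq_0_iff)
  qed
  have t0: "t \<noteq> 0" using u wz unfolding null_lift_def by auto
  show ?thesis unfolding same_line_def
  proof (intro exI[of _ "- 1 / t"] conjI ballI)
    show "- 1 / t \<noteq> 0" using t0 by simp
    fix k assume "k \<in> {1..n+1}"
    then show "v k = - 1 / t * u k" using wz t0 by (simp add: field_simps)
  qed
qed

definition mmul :: "nat \<Rightarrow> (nat \<Rightarrow> nat \<Rightarrow> complex) \<Rightarrow> (nat \<Rightarrow> nat \<Rightarrow> complex) \<Rightarrow> (nat \<Rightarrow> nat \<Rightarrow> complex)" where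
  "mmul n A B = (\<lambda>k j. \<Sum>l\<in>{1..n+1}. A k l * B l j)"

definition swp :: "nat \<Rightarrow> nat \<Rightarrow> nat" where
  "swp n j = (if j = 1 then n+1 else if j = n+1 then 1 else j)"

definition reflm :: "nat \<Rightarrow> (nat \<Rightarrow> complex) \<Rightarrow> complex \<Rightarrow> (nat \<Rightarrow> nat \<Rightarrow> complex)" where
  "reflm n u \<alpha> = (\<lambda>k j. (if k = j then 1 else 0) + \<alpha> * u k * cnj (u (swp n j)))"

lemma mat_vec_mmul: "mat_vec n (mmul n A B) Z = mat_vec n A (mat_vec n B Z)"
  unfolding mat_vec_def mmul_def
proof (rule ext)
  fix k
  have "(\<Sum>j\<in>{1..n+1}. (\<Sum>l\<in>{1..n+1}. A k l * B l j) * Z j)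
     = (\<Sum>j\<in>{1..n+1}. \<Sum>l\<in>{1..n+1}. A k l * (B l j * Z j))"
    by (simp only: sum_distrib_right mult.assoc)
  also have "\<dots> = (\<Sum>l\<in>{1..n+1}. \<Sum>j\<in>{1..n+1}. A k l * (B l j * Z j))"
    by (rule sum.swap)
  also have "\<dots> = (\<Sum>l\<in>{1..n+1}. A k l * (\<Sum>j\<in>{1..n+1}. B l j * Z j))"
    by (simp only: sum_distrib_left)
  finally show "(\<Sum>j\<in>{1..n+1}. (\<Sum>l\<in>{1..n+1}. A k l * B l j) * Z j)
     = (\<Sum>l\<in>{1..n+1}. A k l * (\<Sum>j\<in>{1..n+1}. B l j * Z j))" .
qed

lemma in_U_mmul: "in_U n A \<Longrightarrow> in_U n B \<Longrightarrow> in_U n (mmul n A B)"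
  unfolding in_U_def by (simp add: mat_vec_mmul)

lemma mat_vec_cong: "eqv n Z Z' \<Longrightarrow> mat_vec n A Z = mat_vec n A Z'"
  unfolding mat_vec_def eqv_def by (rule ext) (intro sum.cong; auto)

lemma mat_vec_scale: "mat_vec n A (\<lambda>k. a * Z k) = (\<lambda>k. a * mat_vec n A Z k)"
  unfolding mat_vec_def by (rule ext) (simp add: sum_distrib_left algebra_simps)

lemma sum_swp:
  fixes n :: nat
  assumes "n \<ge> 1"
  shows "(\<Sum>j\<in>{1..n+1}. cnj (u (swp n j)) * Z j) = herm n Z u"
proof -
  have "(\<Sum>j\<in>{2..n}. cnj (u (swp n j)) * Z j) = (\<Sum>j\<in>{2..n}. Z j * cnj (u j))"
    by (intro sum.cong) (auto simp: swp_def)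
  then show ?thesis using assms unfolding sum_split[OF assms] herm_def
    by (simp add: swp_def algebra_simps)
qed

lemma mat_vec_refl:
  fixes n :: nat
  assumes "n \<ge> 1"
  shows "eqv n (mat_vec n (reflm n u \<alpha>) Z) (\<lambda>k. Z k + (\<alpha> * herm n Z u) * u k)"
  unfolding eqv_def
proof
  fix k assume k: "k \<in> {1..n+1}"
  have "mat_vec n (reflm n u \<alpha>) Z k =
     (\<Sum>j\<in>{1..n+1}. (if k = j then 1 else 0) * Z j) + \<alpha> * u k * (\<Sum>j\<in>{1..n+1}. cnj (u (swp n j)) * Z j)"
    unfolding mat_vec_def reflm_def by (simp add: sum.distrib distrib_right sum_distrib_left algebra_simps)
  also have "(\<Sum>j\<in>{1..n+1}. (if k = j then 1 else 0) * Z j) = (\<Sum>j\<in>{1..n+1}. if k = j then Z j else 0)"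
    by (intro sum.cong) auto
  also have "\<dots> = Z k"
    using k by (subst sum.delta') auto
  finally have "mat_vec n (reflm n u \<alpha>) Z k = Z k + \<alpha> * u k * (\<Sum>j\<in>{1..n+1}. cnj (u (swp n j)) * Z j)" .
  then show "mat_vec n (reflm n u \<alpha>) Z k = Z k + (\<alpha> * herm n Z u) * u k"
    unfolding sum_swp[OF assms] by (simp add: algebra_simps)
qed

lemma in_U_refl:
  fixes n :: nat
  assumes n1: "n \<ge> 1" and c: "\<alpha> + cnj \<alpha> + \<alpha> * cnj \<alpha> * herm n u u = 0"
  shows "in_U n (reflm n u \<alpha>)"
  unfolding in_U_def
proof (intro allI)
  fix Z W
  define a where "a = \<alpha> * herm n Z u"
  define b where "b = \<alpha> * herm n W u"
  have "herm n (mat_vec n (reflm n u \<alpha>) Z) (mat_vec n (reflm n u \<alpha>) W)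
      = herm n (\<lambda>k. Z k + a * u k) (\<lambda>k. W k + b * u k)"
    unfolding a_def b_def by (intro herm_cong mat_vec_refl n1)
  also have "\<dots> = herm n Z W + cnj b * herm n Z u + a * herm n u W + a * cnj b * herm n u u"
    by (simp add: herm_add_left herm_add_right herm_scale_left herm_scale_right algebra_simps)
  also have "\<dots> = herm n Z W + herm n Z u * cnj (herm n W u) * (\<alpha> + cnj \<alpha> + \<alpha> * cnj \<alpha> * herm n u u)"
    unfolding a_def b_def using herm_sym[of n u W] by (simp add: algebra_simps)
  also have "\<dots> = herm n Z W" using c by simp
  finally show "herm n (mat_vec n (reflm n u \<alpha>) Z) (mat_vec n (reflm n u \<alpha>) W) = herm n Z W" .
qed

lemma in_U_id: "n \<ge> 1 \<Longrightarrow> in_U n (reflm n u 0)"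
  by (rule in_U_refl) simp_all

lemma mat_vec_id: "n \<ge> 1 \<Longrightarrow> eqv n (mat_vec n (reflm n u 0) Z) Z"
  using mat_vec_refl[of n u 0 Z] by (simp add: eqv_def)

lemma eqv_trans: "eqv n X Y \<Longrightarrow> eqv n Y Z \<Longrightarrow> eqv n X Z"
  unfolding eqv_def by auto

lemma refl_map:
  fixes n :: nat
  assumes n1: "n \<ge> 1" and hxy: "herm n x x = herm n y y"
    and nz: "Re (herm n (\<lambda>k. x k - y k) (\<lambda>k. x k - y k)) \<noteq> 0"
  shows "\<exists>R. in_U n R \<and> eqv n (mat_vec n R x) y \<and>
     (\<forall>z. herm n z (\<lambda>k. x k - y k) = 0 \<longrightarrow> eqv n (mat_vec n R z) z)"
proof -
  define u where "u = (\<lambda>k. x k - y k)"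
  define w where "w = herm n x u"
  define a where "a = herm n u u"
  have a_exp: "a = herm n x x - herm n x y - herm n y x + herm n y y"
    unfolding a_def u_def by (simp add: herm_diff_left herm_diff_right)
  have w_exp: "w = herm n x x - herm n x y" unfolding w_def u_def by (simp add: herm_diff_right)
  have yx: "herm n y x = cnj (herm n x y)" by (rule herm_sym)
  have Ima: "Im a = 0" unfolding a_def by (rule herm_self_real)
  have Imx: "Im (herm n x x) = 0" by (rule herm_self_real)
  have Rea: "Re a = 2 * Re w" using a_exp w_exp yx hxy by simp
  have a0: "Re a \<noteq> 0" using nz unfolding a_def u_def .
  have w0: "w \<noteq> 0" using Rea a0 by auto
  define \<alpha> where "\<alpha> = - 1 / w"
  have ar: "a = complex_of_real (Re a)" using Ima by (simp add: complex_eq_iff)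
  have wc: "w + cnj w = complex_of_real (2 * Re w)" by (simp add: complex_add_cnj)
  have cw0: "cnj w \<noteq> 0" using w0 by simp
  have "\<alpha> + cnj \<alpha> + \<alpha> * cnj \<alpha> * a = (a - (w + cnj w)) / (w * cnj w)"
    unfolding \<alpha>_def using w0 cw0 by (simp add: field_simps)
  also have "a - (w + cnj w) = 0" using ar wc Rea by simp
  finally have cond: "\<alpha> + cnj \<alpha> + \<alpha> * cnj \<alpha> * herm n u u = 0" unfolding a_def by simp
  have inU: "in_U n (reflm n u \<alpha>)" by (rule in_U_refl[OF n1 cond])
  have "eqv n (mat_vec n (reflm n u \<alpha>) x) (\<lambda>k. x k + (\<alpha> * herm n x u) * u k)"
    by (rule mat_vec_refl[OF n1])
  moreover have "(\<lambda>k. x k + (\<alpha> * herm n x u) * u k) = y"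
  proof
    fix k
    have "\<alpha> * herm n x u = -1" unfolding \<alpha>_def w_def[symmetric] using w0 by simp
    then show "x k + (\<alpha> * herm n x u) * u k = y k" unfolding u_def by simp
  qed
  ultimately have m: "eqv n (mat_vec n (reflm n u \<alpha>) x) y" by simp
  have f: "\<forall>z. herm n z u = 0 \<longrightarrow> eqv n (mat_vec n (reflm n u \<alpha>) z) z"
  proof (intro allI impI)
    fix z assume "herm n z u = 0"
    then show "eqv n (mat_vec n (reflm n u \<alpha>) z) z"
      using mat_vec_refl[OF n1, of u \<alpha> z] by simp
  qed
  show ?thesis using inU m f unfolding u_def by blast
qed

lemma neg_map:
  fixes n :: nat
  assumes n1: "n \<ge> 1" and hxy: "herm n x x = herm n y y" and neg: "Re (herm n y y) < 0"
  shows "\<exists>A. in_U n A \<and> eqv n (mat_vec n A x) y"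
proof -
  define z where "z = herm n x y"
  define \<zeta> where "\<zeta> = (if z = 0 then 1 else z / complex_of_real (cmod z))"
  have zz: "\<zeta> * cnj \<zeta> = 1"
    unfolding \<zeta>_def by (auto simp: complex_norm_square[symmetric] norm_divide simp del: of_real_power)
  have cz: "cnj \<zeta> * z = complex_of_real (cmod z)"
  proof (cases "z = 0")
    case False
    have e: "z * cnj z = complex_of_real (cmod z) * complex_of_real (cmod z)"
      by (metis complex_norm_square of_real_mult power2_eq_square)
    show ?thesis unfolding \<zeta>_def using False e by (simp add: field_simps)
  qed (simp add: \<zeta>_def)
  define y2 where "y2 = (\<lambda>k. \<zeta> * y k)"
  have hxy2: "herm n x y2 = complex_of_real (cmod z)"
    unfolding y2_def herm_scale_right z_def[symmetric] using cz .
  have hy2x: "herm n y2 x = complex_of_real (cmod z)"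
    using herm_sym[of n y2 x] hxy2 by simp
  have hy2y2: "herm n y2 y2 = herm n y y"
    unfolding y2_def herm_scale_right herm_scale_left using zz by (simp add: algebra_simps)
  have "herm n (\<lambda>k. x k - y2 k) (\<lambda>k. x k - y2 k) = herm n x x - herm n x y2 - herm n y2 x + herm n y2 y2"
    by (simp add: herm_diff_left herm_diff_right)
  then have "Re (herm n (\<lambda>k. x k - y2 k) (\<lambda>k. x k - y2 k)) = 2 * Re (herm n y y) - 2 * cmod z"
    using hxy hxy2 hy2x hy2y2 by simp
  then have "Re (herm n (\<lambda>k. x k - y2 k) (\<lambda>k. x k - y2 k)) \<noteq> 0"
    using neg norm_ge_zero[of z] by linarith
  then obtain R where R: "in_U n R" "eqv n (mat_vec n R x) y2"
    using refl_map[OF n1] hxy hy2y2 by metis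
  define \<beta> where "\<beta> = (cnj \<zeta> - 1) / herm n y y"
  have b0: "herm n y y \<noteq> 0" using neg by auto
  have yr: "herm n y y = complex_of_real (Re (herm n y y))"
    using herm_self_real[of n y] by (simp add: complex_eq_iff)
  have "\<beta> + cnj \<beta> + \<beta> * cnj \<beta> * herm n y y
      = ((cnj \<zeta> - 1) + (\<zeta> - 1) + (cnj \<zeta> - 1) * (\<zeta> - 1)) / herm n y y"
    unfolding \<beta>_def using b0 herm_sym[of n y y, symmetric] by (simp add: field_simps)
  also have "(cnj \<zeta> - 1) + (\<zeta> - 1) + (cnj \<zeta> - 1) * (\<zeta> - 1) = 0"
    using zz by (simp add: algebra_simps)
  finally have cond: "\<beta> + cnj \<beta> + \<beta> * cnj \<beta> * herm n y y = 0" by simp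
  have P: "in_U n (reflm n y \<beta>)" by (rule in_U_refl[OF n1 cond])
  have "eqv n (mat_vec n (reflm n y \<beta>) y2) (\<lambda>k. y2 k + (\<beta> * herm n y2 y) * y k)"
    by (rule mat_vec_refl[OF n1])
  moreover have "(\<lambda>k. y2 k + (\<beta> * herm n y2 y) * y k) = y"
  proof
    fix k
    have "herm n y2 y = \<zeta> * herm n y y" unfolding y2_def herm_scale_left ..
    then have "y2 k + (\<beta> * herm n y2 y) * y k = (\<zeta> + (cnj \<zeta> - 1) * \<zeta>) * y k"
      unfolding \<beta>_def y2_def using b0 by (simp add: field_simps)
    also have "\<zeta> + (cnj \<zeta> - 1) * \<zeta> = 1" using zz by (simp add: algebra_simps)
    finally show "y2 k + (\<beta> * herm n y2 y) * y k = y k" by simp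
  qed
  ultimately have Py: "eqv n (mat_vec n (reflm n y \<beta>) y2) y" by simp
  have "mat_vec n (mmul n (reflm n y \<beta>) R) x = mat_vec n (reflm n y \<beta>) y2"
    unfolding mat_vec_mmul using mat_vec_cong[OF R(2)] by simp
  then show ?thesis using in_U_mmul[OF P R(1)] Py by metis
qed

lemma ext_step:
  fixes n :: nat and s t :: "nat \<Rightarrow> nat \<Rightarrow> complex"
  assumes n1: "n \<ge> 1" and A: "in_U n A"
    and AI: "\<forall>i\<in>I. eqv n (mat_vec n A (s i)) (t i)"
    and j: "j \<in> I" and neg: "Re (herm n (t j) (t j)) < 0"
    and hxy: "herm n x x = herm n y y"
    and gram: "\<forall>i\<in>I. herm n x (s i) = herm n y (t i)"
  shows "\<exists>B. in_U n B \<and> (\<forall>i\<in>I. eqv n (mat_vec n B (s i)) (t i)) \<and> eqv n (mat_vec n B x) y"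
proof -
  define X where "X = mat_vec n A x"
  define u where "u = (\<lambda>k. X k - y k)"
  have hX: "herm n X X = herm n y y" using A hxy unfolding X_def in_U_def by simp
  have ut: "herm n (t i) u = 0" if i: "i \<in> I" for i
  proof -
    have "herm n X (t i) = herm n X (mat_vec n A (s i))"
      using AI i by (intro herm_cong) (auto simp: eqv_def)
    also have "\<dots> = herm n x (s i)" using A unfolding X_def in_U_def by simp
    finally have "herm n u (t i) = 0" unfolding u_def herm_diff_left using gram i by simp
    then show ?thesis using herm_sym[of n "t i" u] by simp
  qed
  show ?thesis
  proof (cases "\<exists>k\<in>{1..n+1}. u k \<noteq> 0")
    case False
    then have "eqv n X y" unfolding eqv_def u_def by auto
    then show ?thesis using A AI unfolding X_def by blast
  next
    case True
    have "herm n u (t j) = 0" using ut[OF j] herm_sym[of n u "t j"] by simp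
    then have "Re (herm n u u) > 0" using pos_compl[OF n1 neg _ True] by blast
    then obtain R where R: "in_U n R" "eqv n (mat_vec n R X) y"
      "\<forall>z. herm n z u = 0 \<longrightarrow> eqv n (mat_vec n R z) z"
      using refl_map[OF n1 hX] unfolding u_def by (metis less_irrefl)
    have "\<forall>i\<in>I. eqv n (mat_vec n (mmul n R A) (s i)) (t i)"
    proof
      fix i assume i: "i \<in> I"
      have "mat_vec n (mmul n R A) (s i) = mat_vec n R (t i)"
        unfolding mat_vec_mmul using mat_vec_cong AI i by metis
      then show "eqv n (mat_vec n (mmul n R A) (s i)) (t i)" using R(3) ut[OF i] by simp
    qed
    moreover have "eqv n (mat_vec n (mmul n R A) x) y" unfolding mat_vec_mmul X_def[symmetric] using R(2) .
    ultimately show ?thesis using in_U_mmul[OF R(1) A] by blast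
  qed
qed

lemma witt4:
  fixes n :: nat and s t :: "nat \<Rightarrow> nat \<Rightarrow> complex"
  assumes n1: "n \<ge> 1"
    and gram: "\<forall>i\<in>{1..4}. \<forall>j\<in>{1..4}. herm n (s i) (s j) = herm n (t i) (t j)"
    and h12: "herm n (t 1) (t 2) = 1" and t1: "herm n (t 1) (t 1) = 0" and t2: "herm n (t 2) (t 2) = 0"
  shows "\<exists>A. in_U n A \<and> (\<forall>i\<in>{1..4}. eqv n (mat_vec n A (s i)) (t i))"
proof -
  define s' where "s' = s(0 := (\<lambda>k. s 1 k - s 2 k))"
  define t' where "t' = t(0 := (\<lambda>k. t 1 k - t 2 k))"
  have g0: "herm n (s' i) (s' j) = herm n (t' i) (t' j)" if ij: "i \<in> {0..4}" "j \<in> {0..4}" for i j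
  proof -
    have G: "herm n (s a) (s b) = herm n (t a) (t b)" if "a \<in> {1..4}" "b \<in> {1..4}" for a b
      using gram that by blast
    have one: "(1::nat) \<in> {1..4}" and two: "(2::nat) \<in> {1..4}" by auto
    consider "i = 0" "j = 0" | "i = 0" "j \<in> {1..4}" | "i \<in> {1..4}" "j = 0" | "i \<in> {1..4}" "j \<in> {1..4}"
      using ij by (cases "i = 0"; cases "j = 0") auto
    then show ?thesis
    proof cases
      case 1 show ?thesis unfolding s'_def t'_def 1 fun_upd_same herm_diff_left herm_diff_right
          G[OF one one] G[OF one two] G[OF two one] G[OF two two] by (rule refl)
    next
      case 2
      then have e: "s' j = s j" "t' j = t j" by (auto simp: s'_def t'_def)
      have e0: "s' 0 = (\<lambda>k. s 1 k - s 2 k)" "t' 0 = (\<lambda>k. t 1 k - t 2 k)" by (auto simp: s'_def t'_def)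
      show ?thesis unfolding 2(1) e e0 herm_diff_left
        G[OF one 2(2)] G[OF two 2(2)] by (rule refl)
    next
      case 3
      then have e: "s' i = s i" "t' i = t i" by (auto simp: s'_def t'_def)
      have e0: "s' 0 = (\<lambda>k. s 1 k - s 2 k)" "t' 0 = (\<lambda>k. t 1 k - t 2 k)" by (auto simp: s'_def t'_def)
      show ?thesis unfolding 3(2) e e0 herm_diff_right
        G[OF 3(1) one] G[OF 3(1) two] by (rule refl)
    next
      case 4 then have "i \<noteq> 0" "j \<noteq> 0" by auto
      then show ?thesis unfolding s'_def t'_def using G[OF 4] by simp
    qed
  qed
  have h21: "herm n (t 2) (t 1) = 1" using herm_sym[of n "t 2" "t 1"] h12 by simp
  have neg: "Re (herm n (t' 0) (t' 0)) < 0"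
    unfolding t'_def fun_upd_same herm_diff_left herm_diff_right h12 h21 t1 t2 by simp
  obtain A0 where A0: "in_U n A0" "eqv n (mat_vec n A0 (s' 0)) (t' 0)"
    using neg_map[OF n1 g0 neg] by force
  have "\<exists>B. in_U n B \<and> (\<forall>i\<in>{0}. eqv n (mat_vec n B (s' i)) (t' i)) \<and> eqv n (mat_vec n B (s' 1)) (t' 1)"
    by (rule ext_step[where s=s' and t=t' and j=0 and I="{0}", OF n1 A0(1) _ _ neg]) (use A0 g0 in auto)
  then obtain A1 where A1: "in_U n A1" "\<forall>i\<in>{0,1}. eqv n (mat_vec n A1 (s' i)) (t' i)" by auto
  have "\<exists>B. in_U n B \<and> (\<forall>i\<in>{0,1}. eqv n (mat_vec n B (s' i)) (t' i)) \<and> eqv n (mat_vec n B (s' 2)) (t' 2)"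
    by (rule ext_step[where j=0, OF n1 A1(1) A1(2) _ neg]) (use g0 in auto)
  then obtain A2 where A2: "in_U n A2" "\<forall>i\<in>{0,1,2}. eqv n (mat_vec n A2 (s' i)) (t' i)" by auto
  have "\<exists>B. in_U n B \<and> (\<forall>i\<in>{0,1,2}. eqv n (mat_vec n B (s' i)) (t' i)) \<and> eqv n (mat_vec n B (s' 3)) (t' 3)"
    by (rule ext_step[where j=0, OF n1 A2(1) A2(2) _ neg]) (use g0 in auto)
  then obtain A3 where A3: "in_U n A3" "\<forall>i\<in>{0,1,2,3}. eqv n (mat_vec n A3 (s' i)) (t' i)" by auto
  have "\<exists>B. in_U n B \<and> (\<forall>i\<in>{0,1,2,3}. eqv n (mat_vec n B (s' i)) (t' i)) \<and> eqv n (mat_vec n B (s' 4)) (t' 4)"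
    by (rule ext_step[where j=0, OF n1 A3(1) A3(2) _ neg]) (use g0 in auto)
  then obtain A4 where A4: "in_U n A4" "\<forall>i\<in>{0,1,2,3,4}. eqv n (mat_vec n A4 (s' i)) (t' i)" by auto
  have "\<forall>i\<in>{1..4}. eqv n (mat_vec n A4 (s i)) (t i)"
  proof
    fix i :: nat assume i: "i \<in> {1..4}"
    then have "i \<in> {0,1,2,3,4}" "i \<noteq> 0" by auto
    then show "eqv n (mat_vec n A4 (s i)) (t i)" using A4(2) unfolding s'_def t'_def by force
  qed
  then show ?thesis using A4(1) by blast
qed

lemma herm_cc: "herm n (\<lambda>k. a * X k) (\<lambda>k. b * Y k) = a * cnj b * herm n X Y"
  by (simp add: herm_scale_left herm_scale_right)

lemma quad_nz:
  fixes n :: nat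
  assumes n1: "n \<ge> 1" and q: "distinct_boundary_quadruple n p"
    and i: "i \<in> {1..4}" and j: "j \<in> {1..4}" and ij: "i \<noteq> j"
  shows "herm n (p i) (p j) \<noteq> 0"
  using null_orth_same[OF n1, of "p i" "p j"] q i j ij unfolding distinct_boundary_quadruple_def by blast

lemma quad_null:
  assumes q: "distinct_boundary_quadruple n p" and i: "i \<in> {1..4}"
  shows "herm n (p i) (p i) = 0"
  using q i unfolding distinct_boundary_quadruple_def null_lift_def by blast

lemma chain_unique:
  fixes c1 c2 c3 c4 d1 d2 d3 d4 :: complex
  assumes nz: "c1 \<noteq> 0" "c2 \<noteq> 0" "c3 \<noteq> 0" "c4 \<noteq> 0" "d1 \<noteq> 0" "d2 \<noteq> 0" "d3 \<noteq> 0" "d4 \<noteq> 0"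
    and P12: "c1 * cnj c2 = d1 * cnj d2" and P23: "c2 * cnj c3 = d2 * cnj d3"
    and P34: "c3 * cnj c4 = d3 * cnj d4" and M13: "cmod c1 * cmod c3 = cmod d1 * cmod d3"
  shows "\<exists>l. cmod l = 1 \<and> d1 = l * c1 \<and> d2 = l * c2 \<and> d3 = l * c3 \<and> d4 = l * c4"
proof -
  have m12: "cmod c1 * cmod c2 = cmod d1 * cmod d2" using arg_cong[OF P12, of cmod] by (simp add: norm_mult)
  have m23: "cmod c2 * cmod c3 = cmod d2 * cmod d3" using arg_cong[OF P23, of cmod] by (simp add: norm_mult)
  have m34: "cmod c3 * cmod c4 = cmod d3 * cmod d4" using arg_cong[OF P34, of cmod] by (simp add: norm_mult)
  have "(cmod c1 * cmod c3) * (cmod c2)^2 = (cmod d1 * cmod d3) * (cmod d2)^2"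
  proof -
    have "(cmod c1 * cmod c3) * (cmod c2)^2 = (cmod c1 * cmod c2) * (cmod c2 * cmod c3)" by (simp add: power2_eq_square algebra_simps)
    also have "\<dots> = (cmod d1 * cmod d2) * (cmod d2 * cmod d3)" using m12 m23 by simp
    finally show ?thesis by (simp add: power2_eq_square algebra_simps)
  qed
  then have "(cmod c2)^2 = (cmod d2)^2" using M13 nz by simp
  then have e2: "cmod c2 = cmod d2" by (simp add: power2_eq_iff_nonneg)
  have e1: "cmod c1 = cmod d1" using m12 e2 nz by simp
  have e3: "cmod c3 = cmod d3" using m23 e2 nz by simp
  define l where "l = d1 / c1"
  have l1: "cmod l = 1" using e1 nz unfolding l_def by (simp add: norm_divide)
  have ll: "l * cnj l = 1" using l1 by (metis complex_norm_square mult.commute of_real_1 power_one)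
  have l0: "l \<noteq> 0" using l1 by auto
  have il: "cnj l = 1 / l" using ll l0 by (simp add: field_simps mult.commute)
  have d1: "d1 = l * c1" using nz unfolding l_def by simp
  have d2: "d2 = l * c2"
  proof -
    have "l * c1 * cnj d2 = c1 * cnj c2" by (simp only: P12 d1)
    then have "cnj d2 = cnj c2 / l" using nz l0 by (auto simp: field_simps)
    also have "\<dots> = cnj c2 * cnj l" unfolding il by simp
    finally have "cnj d2 = cnj (l * c2)" by (simp add: mult.commute)
    then show ?thesis by (metis complex_cnj_cnj)
  qed
  have d3: "d3 = l * c3"
  proof -
    have "l * c2 * cnj d3 = c2 * cnj c3" by (simp only: P23 d2)
    then have "cnj d3 = cnj c3 / l" using nz l0 by (auto simp: field_simps)
    also have "\<dots> = cnj c3 * cnj l" unfolding il by simp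
    finally have "cnj d3 = cnj (l * c3)" by (simp add: mult.commute)
    then show ?thesis by (metis complex_cnj_cnj)
  qed
  have d4: "d4 = l * c4"
  proof -
    have "l * c3 * cnj d4 = c3 * cnj c4" by (simp only: P34 d3)
    then have "cnj d4 = cnj c4 / l" using nz l0 by (auto simp: field_simps)
    also have "\<dots> = cnj c4 * cnj l" unfolding il by simp
    finally have "cnj d4 = cnj (l * c4)" by (simp add: mult.commute)
    then show ?thesis by (metis complex_cnj_cnj)
  qed
  show ?thesis using l1 d1 d2 d3 d4 by blast
qed

lemma gram_entry:
  assumes "is_norm_gram n p G" "\<forall>i\<in>{1..4}. \<forall>j\<in>{1..4}. G i j = herm n (\<lambda>k. c i * p i k) (\<lambda>k. c j * p j k)"
    "i \<in> {1..4}" "j \<in> {1..4}"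
  shows "G i j = c i * cnj (c j) * herm n (p i) (p j)"
  using assms by (simp add: herm_cc)

lemma four_cases: "(i::nat) \<in> {1..4} \<Longrightarrow> i = 1 \<or> i = 2 \<or> i = 3 \<or> i = 4"
  by auto

lemma norm_gram_unique:
  fixes n :: nat
  assumes n1: "n \<ge> 1" and q: "distinct_boundary_quadruple n p"
    and G1: "is_norm_gram n p G1" and G2: "is_norm_gram n p G2"
  shows "G1 = G2"
proof -
  obtain c where c: "\<forall>i\<in>{1..4}. c i \<noteq> 0"
    "\<forall>i\<in>{1..4}. \<forall>j\<in>{1..4}. G1 i j = herm n (\<lambda>k. c i * p i k) (\<lambda>k. c j * p j k)"
    using G1 unfolding is_norm_gram_def by blast
  obtain d where d: "\<forall>i\<in>{1..4}. d i \<noteq> 0"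
    "\<forall>i\<in>{1..4}. \<forall>j\<in>{1..4}. G2 i j = herm n (\<lambda>k. d i * p i k) (\<lambda>k. d j * p j k)"
    using G2 unfolding is_norm_gram_def by blast
  have E1: "G1 i j = c i * cnj (c j) * herm n (p i) (p j)" if "i \<in> {1..4}" "j \<in> {1..4}" for i j
    using c(2) that by (simp add: herm_cc)
  have E2: "G2 i j = d i * cnj (d j) * herm n (p i) (p j)" if "i \<in> {1..4}" "j \<in> {1..4}" for i j
    using d(2) that by (simp add: herm_cc)
  have r: "(1::nat) \<in> {1..4}" "(2::nat) \<in> {1..4}" "(3::nat) \<in> {1..4}" "(4::nat) \<in> {1..4}" by auto
  have a12: "herm n (p 1) (p 2) \<noteq> 0" by (rule quad_nz[OF n1 q]) auto
  have a23: "herm n (p 2) (p 3) \<noteq> 0" by (rule quad_nz[OF n1 q]) auto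
  have a34: "herm n (p 3) (p 4) \<noteq> 0" by (rule quad_nz[OF n1 q]) auto
  have a13: "herm n (p 1) (p 3) \<noteq> 0" by (rule quad_nz[OF n1 q]) auto
  have "c 1 * cnj (c 2) * herm n (p 1) (p 2) = d 1 * cnj (d 2) * herm n (p 1) (p 2)"
    using E1[OF r(1,2)] E2[OF r(1,2)] G1 G2 unfolding is_norm_gram_def by simp
  then have P12: "c 1 * cnj (c 2) = d 1 * cnj (d 2)" using a12 by simp
  have "c 2 * cnj (c 3) * herm n (p 2) (p 3) = d 2 * cnj (d 3) * herm n (p 2) (p 3)"
    using E1[OF r(2,3)] E2[OF r(2,3)] G1 G2 unfolding is_norm_gram_def by simp
  then have P23: "c 2 * cnj (c 3) = d 2 * cnj (d 3)" using a23 by simp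
  have "c 3 * cnj (c 4) * herm n (p 3) (p 4) = d 3 * cnj (d 4) * herm n (p 3) (p 4)"
    using E1[OF r(3,4)] E2[OF r(3,4)] G1 G2 unfolding is_norm_gram_def by simp
  then have P34: "c 3 * cnj (c 4) = d 3 * cnj (d 4)" using a34 by simp
  have "cmod (c 1 * cnj (c 3) * herm n (p 1) (p 3)) = cmod (d 1 * cnj (d 3) * herm n (p 1) (p 3))"
    using E1[OF r(1,3)] E2[OF r(1,3)] G1 G2 unfolding is_norm_gram_def by simp
  then have M13: "cmod (c 1) * cmod (c 3) = cmod (d 1) * cmod (d 3)" using a13 by (simp add: norm_mult)
  obtain l where l: "cmod l = 1" "d 1 = l * c 1" "d 2 = l * c 2" "d 3 = l * c 3" "d 4 = l * c 4"
    using chain_unique[OF _ _ _ _ _ _ _ _ P12 P23 P34 M13] c(1) d(1) r by blast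
  have ll: "l * cnj l = 1" using l(1) by (metis complex_norm_square mult.commute of_real_1 power_one)
  have dl: "d i = l * c i" if "i \<in> {1..4}" for i using four_cases[OF that] l by auto
  show ?thesis
  proof (intro ext)
    fix i j
    show "G1 i j = G2 i j"
    proof (cases "i \<in> {1..4} \<and> j \<in> {1..4}")
      case True
      then have "G2 i j = (l * cnj l) * (c i * cnj (c j) * herm n (p i) (p j))"
        using E2 dl by (simp add: algebra_simps)
      then show ?thesis using E1 True ll by simp
    next
      case False
      then show ?thesis using G1 G2 unfolding is_norm_gram_def by auto
    qed
  qed
qed

lemma norm_gram_exists:
  fixes n :: nat
  assumes n1: "n \<ge> 1" and q: "distinct_boundary_quadruple n p"
  shows "\<exists>G. is_norm_gram n p G"
proof -
  define a12 where "a12 = herm n (p 1) (p 2)"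
  define a23 where "a23 = herm n (p 2) (p 3)"
  define a34 where "a34 = herm n (p 3) (p 4)"
  define a13 where "a13 = herm n (p 1) (p 3)"
  have n12: "a12 \<noteq> 0" unfolding a12_def by (rule quad_nz[OF n1 q]) auto
  have n23: "a23 \<noteq> 0" unfolding a23_def by (rule quad_nz[OF n1 q]) auto
  have n34: "a34 \<noteq> 0" unfolding a34_def by (rule quad_nz[OF n1 q]) auto
  have n13: "a13 \<noteq> 0" unfolding a13_def by (rule quad_nz[OF n1 q]) auto
  define r where "r = sqrt (cmod a12 / (cmod a23 * cmod a13))"
  have rpos: "r > 0" unfolding r_def using n12 n23 n13 by simp
  have r2: "r * r = cmod a12 / (cmod a23 * cmod a13)" unfolding r_def
    by simp
  define R where "R = complex_of_real r"
  have R0: "R \<noteq> 0" using rpos unfolding R_def by simp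
  have cR: "cnj R = R" unfolding R_def by simp
  define c :: "nat \<Rightarrow> complex" where "c = (\<lambda>i. if i = 1 then R * cnj a23 / a12 else if i = 2 then 1 / (R * a23)
      else if i = 3 then R else 1 / (R * cnj a34))"
  define G where "G = (\<lambda>i j. if i \<in> {1..4} \<and> j \<in> {1..4} then herm n (\<lambda>k. c i * p i k) (\<lambda>k. c j * p j k) else 0)"
  have c0: "\<forall>i\<in>{1..4}. c i \<noteq> 0" unfolding c_def using R0 n12 n23 n34 by auto
  have Ge: "G i j = c i * cnj (c j) * herm n (p i) (p j)" if "i \<in> {1..4}" "j \<in> {1..4}" for i j
    unfolding G_def using that by (simp add: herm_cc)
  have r: "(1::nat) \<in> {1..4}" "(2::nat) \<in> {1..4}" "(3::nat) \<in> {1..4}" "(4::nat) \<in> {1..4}" by auto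
  have g12: "G 1 2 = 1" unfolding Ge[OF r(1,2)] a12_def[symmetric] unfolding c_def using R0 n12 n23 cR
    by (simp add: field_simps)
  have g23: "G 2 3 = 1" unfolding Ge[OF r(2,3)] a23_def[symmetric] unfolding c_def using R0 n12 n23 cR
    by (simp add: field_simps)
  have g34: "G 3 4 = 1" unfolding Ge[OF r(3,4)] a34_def[symmetric] unfolding c_def using R0 n34 cR
    by (simp add: field_simps)
  have "G 1 3 = R * R * cnj a23 * a13 / a12" unfolding Ge[OF r(1,3)] a13_def[symmetric] unfolding c_def
    using cR by simp
  then have "cmod (G 1 3) = r * r * cmod a23 * cmod a13 / cmod a12"
    unfolding R_def using rpos by (simp add: norm_mult norm_divide)
  also have "\<dots> = 1" unfolding r2 using n12 n23 n13 by simp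
  finally have g13: "cmod (G 1 3) = 1" .
  have gii: "\<forall>i\<in>{1..4}. G i i = 0" using Ge quad_null[OF q] by simp
  have ex: "\<exists>c::nat \<Rightarrow> complex. (\<forall>i\<in>{1..4}. c i \<noteq> 0) \<and>
        (\<forall>i\<in>{1..4}. \<forall>j\<in>{1..4}. G i j = herm n (\<lambda>k. c i * p i k) (\<lambda>k. c j * p j k))"
    using c0 unfolding G_def by auto
  have out: "\<forall>i j. (i \<notin> {1..4} \<or> j \<notin> {1..4}) \<longrightarrow> G i j = 0" unfolding G_def by auto
  have "is_norm_gram n p G"
    unfolding is_norm_gram_def using ex out g12 g23 g34 g13 gii by blast
  then show ?thesis by blast
qed

lemma norm_gram_eq:
  fixes n :: nat
  assumes n1: "n \<ge> 1" and q: "distinct_boundary_quadruple n p" and G: "is_norm_gram n p G"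
  shows "norm_gram n p = G"
  unfolding norm_gram_def
proof (rule the_equality[where P="is_norm_gram n p", OF G])
  fix x assume "is_norm_gram n p x" then show "x = G" using norm_gram_unique[OF n1 q] G by blast
qed

lemma norm_gram_is:
  fixes n :: nat
  assumes n1: "n \<ge> 1" and q: "distinct_boundary_quadruple n p"
  shows "is_norm_gram n p (norm_gram n p)"
  using norm_gram_exists[OF n1 q] norm_gram_eq[OF n1 q] by metis

lemma conj_vec_scale: "conj_vec (\<lambda>k. a * X k) = (\<lambda>k. cnj a * conj_vec X k)"
  unfolding conj_vec_def by simp

theorem corollary2p2:
  fixes n :: nat and p p' :: "nat \<Rightarrow> nat \<Rightarrow> complex"
  assumes "n \<ge> 1"
    and "distinct_boundary_quadruple n p"
    and "distinct_boundary_quadruple n p'"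
  shows "(\<exists>A. in_U n A \<and> (\<forall>i\<in>{1..4}. antiholo_maps n A (p i) (p' i)))
     \<longleftrightarrow> norm_gram n p' = (\<lambda>i j. cnj (norm_gram n p i j))"
proof -
  note n1 = assms(1) and q = assms(2) and q' = assms(3)
  define G where "G = norm_gram n p"
  have GG: "is_norm_gram n p G" unfolding G_def by (rule norm_gram_is[OF n1 q])
  obtain c where c: "\<forall>i\<in>{1..4}. c i \<noteq> 0"
    "\<forall>i\<in>{1..4}. \<forall>j\<in>{1..4}. G i j = herm n (\<lambda>k. c i * p i k) (\<lambda>k. c j * p j k)"
    using GG unfolding is_norm_gram_def by blast
  show ?thesis unfolding G_def[symmetric]
  proof
    assume "\<exists>A. in_U n A \<and> (\<forall>i\<in>{1..4}. antiholo_maps n A (p i) (p' i))"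
    then obtain A where A: "in_U n A" "\<forall>i\<in>{1..4}. antiholo_maps n A (p i) (p' i)" by blast
    have "\<forall>i\<in>{1..4}. \<exists>e. e \<noteq> 0 \<and> (\<forall>k\<in>{1..n+1}. p' i k = e * mat_vec n A (conj_vec (p i)) k)"
      using A(2) unfolding antiholo_maps_def same_line_def by blast
    then obtain e where e: "\<forall>i\<in>{1..4}. e i \<noteq> 0 \<and> (\<forall>k\<in>{1..n+1}. p' i k = e i * mat_vec n A (conj_vec (p i)) k)"
      by metis
    define c' where "c' = (\<lambda>i. cnj (c i) / e i)"
    have ev: "eqv n (\<lambda>k. c' i * p' i k) (mat_vec n A (conj_vec (\<lambda>k. c i * p i k)))" if i: "i \<in> {1..4}" for i
      unfolding eqv_def conj_vec_scale mat_vec_scale c'_def using e i by simp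
    have "is_norm_gram n p' (\<lambda>i j. cnj (G i j))"
      unfolding is_norm_gram_def
    proof (intro conjI)
      show "\<exists>c. (\<forall>i\<in>{1..4}. c i \<noteq> 0) \<and>
        (\<forall>i\<in>{1..4}. \<forall>j\<in>{1..4}. cnj (G i j) = herm n (\<lambda>k. c i * p' i k) (\<lambda>k. c j * p' j k))"
      proof (intro exI[of _ c'] conjI ballI)
        fix i :: nat assume "i \<in> {1..4}" then show "c' i \<noteq> 0" using c e unfolding c'_def by simp
      next
        fix i j :: nat assume i: "i \<in> {1..4}" and j: "j \<in> {1..4}"
        have "herm n (\<lambda>k. c' i * p' i k) (\<lambda>k. c' j * p' j k)
           = herm n (mat_vec n A (conj_vec (\<lambda>k. c i * p i k))) (mat_vec n A (conj_vec (\<lambda>k. c j * p j k)))"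
          by (rule herm_cong[OF ev[OF i] ev[OF j]])
        also have "\<dots> = herm n (conj_vec (\<lambda>k. c i * p i k)) (conj_vec (\<lambda>k. c j * p j k))"
          using A(1) unfolding in_U_def by simp
        also have "\<dots> = cnj (G i j)" unfolding herm_conj using c(2) i j by simp
        finally show "cnj (G i j) = herm n (\<lambda>k. c' i * p' i k) (\<lambda>k. c' j * p' j k)" by simp
      qed
    qed (use GG in \<open>auto simp: is_norm_gram_def\<close>)
    then show "norm_gram n p' = (\<lambda>i j. cnj (G i j))" by (rule norm_gram_eq[OF n1 q'])
  next
    assume H: "norm_gram n p' = (\<lambda>i j. cnj (G i j))"
    have GG': "is_norm_gram n p' (norm_gram n p')" by (rule norm_gram_is[OF n1 q'])
    obtain c' where c': "\<forall>i\<in>{1..4}. c' i \<noteq> 0"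
      "\<forall>i\<in>{1..4}. \<forall>j\<in>{1..4}. norm_gram n p' i j = herm n (\<lambda>k. c' i * p' i k) (\<lambda>k. c' j * p' j k)"
      using GG' unfolding is_norm_gram_def by blast
    define s where "s = (\<lambda>i. conj_vec (\<lambda>k. c i * p i k))"
    define t where "t = (\<lambda>i. (\<lambda>k. c' i * p' i k))"
    have gram: "\<forall>i\<in>{1..4}. \<forall>j\<in>{1..4}. herm n (s i) (s j) = herm n (t i) (t j)"
      unfolding s_def t_def herm_conj using c(2) c'(2) H by simp
    have r: "(1::nat) \<in> {1..4}" "(2::nat) \<in> {1..4}" by auto
    have h12: "herm n (t 1) (t 2) = 1" unfolding t_def using c'(2) r GG' unfolding is_norm_gram_def by metis
    have t1: "herm n (t 1) (t 1) = 0" unfolding t_def using c'(2) r GG' unfolding is_norm_gram_def by metis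
    have t2: "herm n (t 2) (t 2) = 0" unfolding t_def using c'(2) r GG' unfolding is_norm_gram_def by metis
    obtain A where A: "in_U n A" "\<forall>i\<in>{1..4}. eqv n (mat_vec n A (s i)) (t i)"
      using witt4[OF n1 gram h12 t1 t2] by blast
    have "\<forall>i\<in>{1..4}. antiholo_maps n A (p i) (p' i)"
    proof
      fix i :: nat assume i: "i \<in> {1..4}"
      have ms: "mat_vec n A (s i) = (\<lambda>k. cnj (c i) * mat_vec n A (conj_vec (p i)) k)"
        unfolding s_def conj_vec_scale mat_vec_scale ..
      show "antiholo_maps n A (p i) (p' i)"
        unfolding antiholo_maps_def same_line_def
      proof (intro exI[of _ "cnj (c i) / c' i"] conjI ballI)
        show "cnj (c i) / c' i \<noteq> 0" using c(1) c'(1) i by simp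
        fix k assume k: "k \<in> {1..n+1}"
        have "c' i * p' i k = cnj (c i) * mat_vec n A (conj_vec (p i)) k"
          using A(2) i k ms unfolding eqv_def t_def by metis
        then show "p' i k = cnj (c i) / c' i * mat_vec n A (conj_vec (p i)) k"
          using c'(1) i by (simp add: field_simps)
      qed
    qed
    then show "\<exists>A. in_U n A \<and> (\<forall>i\<in>{1..4}. antiholo_maps n A (p i) (p' i))" using A(1) by blast
  qed
qed

end
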